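(* Let $\delta\in(0,1)$, $\epsilon>0$, $s>1$. Consider any algorithm following the per-arm adaptive phase scheme with private means described in the context, with an arbitrary sampling rule, and stopping according to the private GLR stopping rule with the thresholds $c_{\epsilon,k_1,k_2}$ defined in the context. Then for every bandit instance whose arm distributions are $1$-sub-Gaussian with a unique best arm $a^\star$, $\mathbb{P}(\tau_\delta<\infty,\ \hat a\neq a^\star)\le\delta$, i.e. the algorithm is $\delta$-correct.
   Context: $K$ arms with 1-sub-Gaussian reward distributions and means $\mu_a$, unique best arm $a^\star=\arg\max_a\mu_a$. At round $n$ the algorithm pulls $I_n$ (chosen by any rule based on the past and internal randomness) and observes $X_n\sim\nu_{I_n}$; $N_{n,a}=\sum_{t<n}\mathbf{1}\{I_t=a\}$. Adaptive phases: each arm is pulled once in rounds $1..K$; arm $a$ has phase index $k_a$ starting at 1 with $T_1(a)=K+1$ (phase-1 statistics $\tilde N_{1,a}=1$, $\hat\mu_{1,a}$ the initial reward, $\tilde\mu_{1,a}=\hat\mu_{1,a}+Y_{1,a}$). At the start of each round $n>K$, for every $a$ with $N_{n,a}\ge2N_{T_{k_a}(a),a}$: $k_a\leftarrow k_a+1$, $T_{k_a}(a)=n$, $\tilde N_{k_a,a}=N_{T_{k_a}(a),a}-N_{T_{k_a-1}(a),a}$, $\hat\mu_{k_a,a}=\tilde N_{k_a,a}^{-1}\sum_{s=T_{k_a-1}(a)}^{T_{k_a}(a)-1}X_s\mathbf{1}\{I_s=a\}$, $\tilde\mu_{k_a,a}=\hat\mu_{k_a,a}+Y_{k_a,a}$,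 where $Y_{k,a}\sim$ Laplace with scale $1/(\epsilon\tilde N_{k,a})$ (density $\frac{1}{2b}e^{-|x|/b}$, $b$ the scale), independent of everything else. $k_{n,a}$ is the phase of $a$ at round $n$. Private GLR stopping rule: with $\hat a_n=\arg\max_a\tilde\mu_{k_{n,a},a}$, $\tau_\delta=\inf\{n:\forall b\ne\hat a_n,\ \frac{(\tilde\mu_{k_{n,\hat a_n},\hat a_n}-\tilde\mu_{k_{n,b},b})^2}{1/\tilde N_{k_{n,\hat a_n},\hat a_n}+1/\tilde N_{k_{n,b},b}}\ge2c_{\epsilon,k_{n,\hat a_n},k_{n,b}}(\tilde N_{k_{n,\hat a_n},\hat a_n},\tilde N_{k_{n,b},b},\delta)\}$, recommending $\hat a=\hat a_{\tau_\delta}$. Thresholds: $\zeta$ is the Riemann zeta function; $g_G(\lambda)=2\lambda-2\lambda\log(4\lambda)+\log\zeta(2\lambda)-\frac12\log(1-\lambda)$ and $\mathcal{C}_G(x)=\min_{\lambda\in(1/2,1]}\frac{g_G(\lambda)+x}{\lambda}$; for $k\in\mathbb{N}$, $c_k(n,m,\delta)=2\mathcal{C}_G\big(\frac12\log\frac{(K-1)\zeta(s)^2k^s}{\delta}\big)+2\log(4+\log n)+2\log(4+\log m)$; and $c_{\epsilon,k_1,k_2}(n,m,\delta)=2c_{k_1k_2}(n,m,\delta/2)+\frac{1}{n\epsilon^2}\big(\log\frac{2Kk_1^s\zeta(s)}{\delta}\big)^2+\frac{1}{m\epsilon^2}\big(\log\frac{2Kk_2^s\zeta(s)}{\delta}\big)^2$,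 where $c_{k_1k_2}$ denotes $c_k$ with $k=k_1k_2$. *)

theory Defs
  imports "HOL-Probability.Probability"
begin

definition zeta_r :: "real \<Rightarrow> real" where
  "zeta_r s = (\<Sum>n. 1 / real (Suc n) powr s)"

definition gG :: "real \<Rightarrow> real" where
  "gG l = 2 * l - 2 * l * ln (4 * l) + ln (zeta_r (2 * l)) - 1 / 2 * ln (1 - l)"

text \<open>The minimum over (1/2,1] in the paper: at l = 1 the term -1/2 log(1-l) is +infinity,
  so that point never realises the minimum; we take the infimum over the open interval
  (1/2,1) (Isabelle's ln 0 is not +infinity).\<close>
definition CG :: "real \<Rightarrow> real" where
  "CG x = (INF l\<in>{1/2<..<1}. (gG l + x) / l)"

definition c_k :: "nat \<Rightarrow> real \<Rightarrow> nat \<Rightarrow> real \<Rightarrow> real \<Rightarrow> real \<Rightarrow> real" where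
  "c_k K s k n m \<delta> =
     2 * CG (1 / 2 * ln (real (K - 1) * (zeta_r s)\<^sup>2 * real k powr s / \<delta>))
     + 2 * ln (4 + ln n) + 2 * ln (4 + ln m)"

definition c_eps :: "nat \<Rightarrow> real \<Rightarrow> real \<Rightarrow> nat \<Rightarrow> nat \<Rightarrow> real \<Rightarrow> real \<Rightarrow> real \<Rightarrow> real" where
  "c_eps K s \<epsilon> k1 k2 n m \<delta> =
     2 * c_k K s (k1 * k2) n m (\<delta> / 2)
     + 1 / (n * \<epsilon>\<^sup>2) * (ln (2 * real K * real k1 powr s * zeta_r s / \<delta>))\<^sup>2
     + 1 / (m * \<epsilon>\<^sup>2) * (ln (2 * real K * real k2 powr s * zeta_r s / \<delta>))\<^sup>2"

definition subgauss1 :: "real measure \<Rightarrow> bool" where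
  "subgauss1 N \<longleftrightarrow> prob_space N \<and> sets N = sets borel \<and> integrable N (\<lambda>x. x) \<and>
     (\<forall>l::real. integrable N (\<lambda>x. exp (l * (x - (\<integral>y. y \<partial>N)))) \<and>
        (\<integral>x. exp (l * (x - (\<integral>y. y \<partial>N))) \<partial>N) \<le> exp (l\<^sup>2 / 2))"

definition laplace1 :: "real \<Rightarrow> ennreal" where
  "laplace1 x = ennreal (exp (- \<bar>x\<bar>) / 2)"

section \<open>The algorithm, as a function of the pull sequence I (rounds are numbered from 1)\<close>

definition Ncnt :: "(nat \<Rightarrow> nat) \<Rightarrow> nat \<Rightarrow> nat \<Rightarrow> nat" where
  "Ncnt I n a = card {t. 1 \<le> t \<and> t < n \<and> I t = a}"

text \<open>Reward observed at round t: arm I t pulled for the (N_{t,I t}+1)-th time reads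
  entry number N_{t,I t} (0-based) of its reward table Z (I t).\<close>
definition Xr :: "(nat \<Rightarrow> nat) \<Rightarrow> (nat \<Rightarrow> nat \<Rightarrow> real) \<Rightarrow> nat \<Rightarrow> real" where
  "Xr I Z t = Z (I t) (Ncnt I t (I t))"

text \<open>List [T_1(a), ..., T_{k_{n,a}}(a)] of phase start times known at the start of round n
  (meaningful for n \<ge> K+1).\<close>
primrec phst :: "nat \<Rightarrow> (nat \<Rightarrow> nat) \<Rightarrow> nat \<Rightarrow> nat \<Rightarrow> nat list" where
  "phst K I a 0 = [K + 1]"
| "phst K I a (Suc n) =
     (if Suc n \<le> K + 1 then [K + 1]
      else (let ts = phst K I a n in
            if 2 * Ncnt I (last ts) a \<le> Ncnt I (Suc n) a then ts @ [Suc n] else ts))"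

definition kph :: "nat \<Rightarrow> (nat \<Rightarrow> nat) \<Rightarrow> nat \<Rightarrow> nat \<Rightarrow> nat" where
  "kph K I a n = length (phst K I a n)"

text \<open>T_k(a) for k \<le> k_{n,a}, with the convention T_0(a) = 1 (so that phase 1 consists of
  the initial pull of a).\<close>
definition Tph :: "nat \<Rightarrow> (nat \<Rightarrow> nat) \<Rightarrow> nat \<Rightarrow> nat \<Rightarrow> nat \<Rightarrow> nat" where
  "Tph K I a n k = (1 # phst K I a n) ! k"

definition Ntil :: "nat \<Rightarrow> (nat \<Rightarrow> nat) \<Rightarrow> nat \<Rightarrow> nat \<Rightarrow> nat \<Rightarrow> nat" where
  "Ntil K I a n k = Ncnt I (Tph K I a n k) a - Ncnt I (Tph K I a n (k - 1)) a"

definition muhat :: "nat \<Rightarrow> (nat \<Rightarrow> nat) \<Rightarrow> (nat \<Rightarrow> nat \<Rightarrow> real) \<Rightarrow> nat \<Rightarrow> nat \<Rightarrow> nat \<Rightarrow> real" where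
  "muhat K I Z a n k =
     (\<Sum>t\<in>{Tph K I a n (k - 1)..<Tph K I a n k}. if I t = a then Xr I Z t else 0)
     / real (Ntil K I a n k)"

text \<open>Private mean tilde mu_{k_{n,a},a} = hat mu + Y with Y_{k,a} = W k a / (epsilon tilde N_{k,a}),
  W k a standard Laplace, i.e. Y_{k,a} Laplace of scale 1/(epsilon tilde N_{k,a}).\<close>
definition mutil :: "nat \<Rightarrow> real \<Rightarrow> (nat \<Rightarrow> nat) \<Rightarrow> (nat \<Rightarrow> nat \<Rightarrow> real) \<Rightarrow> (nat \<Rightarrow> nat \<Rightarrow> real)
                      \<Rightarrow> nat \<Rightarrow> nat \<Rightarrow> real" where
  "mutil K \<epsilon> I Z W a n =
     (let k = kph K I a n in muhat K I Z a n k + W k a / (\<epsilon> * real (Ntil K I a n k)))"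

definition ahat :: "nat \<Rightarrow> real \<Rightarrow> (nat \<Rightarrow> nat) \<Rightarrow> (nat \<Rightarrow> nat \<Rightarrow> real) \<Rightarrow> (nat \<Rightarrow> nat \<Rightarrow> real)
                     \<Rightarrow> nat \<Rightarrow> nat" where
  "ahat K \<epsilon> I Z W n = (LEAST a. a < K \<and> (\<forall>b<K. mutil K \<epsilon> I Z W b n \<le> mutil K \<epsilon> I Z W a n))"

definition stops :: "nat \<Rightarrow> real \<Rightarrow> real \<Rightarrow> real \<Rightarrow> (nat \<Rightarrow> nat) \<Rightarrow> (nat \<Rightarrow> nat \<Rightarrow> real)
                      \<Rightarrow> (nat \<Rightarrow> nat \<Rightarrow> real) \<Rightarrow> nat \<Rightarrow> bool" where
  "stops K s \<epsilon> \<delta> I Z W n \<longleftrightarrow> K + 1 \<le> n \<and>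
     (let a = ahat K \<epsilon> I Z W n in
      \<forall>b<K. b \<noteq> a \<longrightarrow>
        (mutil K \<epsilon> I Z W a n - mutil K \<epsilon> I Z W b n)\<^sup>2
          / (1 / real (Ntil K I a n (kph K I a n)) + 1 / real (Ntil K I b n (kph K I b n)))
        \<ge> 2 * c_eps K s \<epsilon> (kph K I a n) (kph K I b n)
               (Ntil K I a n (kph K I a n)) (Ntil K I b n (kph K I b n)) \<delta>)"

definition Iof :: "nat list \<Rightarrow> nat \<Rightarrow> nat" where
  "Iof ps t = (if 1 \<le> t \<and> t \<le> length ps then ps ! (t - 1) else 0)"

text \<open>pulls m = [I_1, ..., I_m].  At round n the sampling rule pol n receives the internal
  randomness u, the past arms and rewards (I_t, X_t) for t < n and the private-mean
  vectors available at the starts of rounds K+1, ..., n.\<close>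
primrec pulls :: "nat \<Rightarrow> real \<Rightarrow> (nat \<Rightarrow> 'u \<Rightarrow> (nat \<times> real) list \<Rightarrow> (nat \<Rightarrow> real) list \<Rightarrow> nat)
                  \<Rightarrow> 'u \<Rightarrow> (nat \<Rightarrow> nat \<Rightarrow> real) \<Rightarrow> (nat \<Rightarrow> nat \<Rightarrow> real) \<Rightarrow> nat \<Rightarrow> nat list" where
  "pulls K \<epsilon> pol u Z W 0 = []"
| "pulls K \<epsilon> pol u Z W (Suc m) =
     (let ps = pulls K \<epsilon> pol u Z W m; I = Iof ps; n = Suc m in
      ps @ [pol n u (map (\<lambda>t. (I t, Xr I Z t)) [1..<n])
                    (map (\<lambda>t. (\<lambda>a. mutil K \<epsilon> I Z W a t)) [K + 1..<n + 1])])"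

definition algI :: "nat \<Rightarrow> real \<Rightarrow> (nat \<Rightarrow> 'u \<Rightarrow> (nat \<times> real) list \<Rightarrow> (nat \<Rightarrow> real) list \<Rightarrow> nat)
                  \<Rightarrow> 'u \<Rightarrow> (nat \<Rightarrow> nat \<Rightarrow> real) \<Rightarrow> (nat \<Rightarrow> nat \<Rightarrow> real) \<Rightarrow> nat \<Rightarrow> nat" where
  "algI K \<epsilon> pol u Z W t = Iof (pulls K \<epsilon> pol u Z W t) t"

definition wrong_stop :: "nat \<Rightarrow> real \<Rightarrow> real \<Rightarrow> real \<Rightarrow> (nat \<Rightarrow> nat) \<Rightarrow> (nat \<Rightarrow> nat \<Rightarrow> real)
                           \<Rightarrow> (nat \<Rightarrow> nat \<Rightarrow> real) \<Rightarrow> nat \<Rightarrow> bool" where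
  "wrong_stop K s \<epsilon> \<delta> I Z W astar \<longleftrightarrow>
     (\<exists>n. stops K s \<epsilon> \<delta> I Z W n) \<and>
     ahat K \<epsilon> I Z W (LEAST n. stops K s \<epsilon> \<delta> I Z W n) \<noteq> astar"

end

theory Submission
  imports Defs
begin


lemma Ncnt_Suc: "1 \<le> n \<Longrightarrow> Ncnt I (Suc n) a = Ncnt I n a + (if I n = a then 1 else 0)"
proof -
  assume n: "1 \<le> n"
  have fin: "finite {t. 1 \<le> t \<and> t < n \<and> I t = a}" by (rule finite_subset[of _ "{..<n}"]) auto
  show ?thesis
  proof (cases "I n = a")
    case True
    have "{t. 1 \<le> t \<and> t < Suc n \<and> I t = a} = insert n {t. 1 \<le> t \<and> t < n \<and> I t = a}"
      using True n by auto
    then show ?thesis using fin True by (simp add: Ncnt_def)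
  next
    case False
    have "{t. 1 \<le> t \<and> t < Suc n \<and> I t = a} = {t. 1 \<le> t \<and> t < n \<and> I t = a}"
      using False n by (auto simp: less_Suc_eq)
    then show ?thesis using False by (simp add: Ncnt_def)
  qed
qed

lemma Ncnt_mono: "n \<le> m \<Longrightarrow> Ncnt I n a \<le> Ncnt I m a"
  unfolding Ncnt_def by (rule card_mono) (auto intro: finite_subset[of _ "{..<m}"])

lemma Ncnt_1[simp]: "Ncnt I 1 a = 0"
  unfolding Ncnt_def by auto

lemma phst_inv:
  assumes base: "Ncnt I (K+1) a = 1" and n: "K + 1 \<le> n"
  shows "phst K I a n \<noteq> [] \<and> (\<forall>i<length (phst K I a n). Ncnt I (phst K I a n ! i) a = 2^i)
         \<and> Ncnt I n a < 2 * Ncnt I (last (phst K I a n)) a"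
  using n
proof (induction n rule: dec_induct)
  case base
  have "phst K I a (K+1) = [K+1]" by simp
  then show ?case using assms by simp
next
  case (step n)
  define ts where "ts = phst K I a n"
  have ne: "ts \<noteq> []" and pw: "\<forall>i<length ts. Ncnt I (ts ! i) a = 2^i"
    and lt: "Ncnt I n a < 2 * Ncnt I (last ts) a" using step.IH by (auto simp: ts_def)
  have lastN: "Ncnt I (last ts) a = 2 ^ (length ts - 1)"
    using pw ne by (simp add: last_conv_nth)
  have sucle: "Ncnt I (Suc n) a \<le> Ncnt I n a + 1"
    using Ncnt_Suc[of n I a] step.hyps by auto
  have ph: "phst K I a (Suc n) = (if 2 * Ncnt I (last ts) a \<le> Ncnt I (Suc n) a then ts @ [Suc n] else ts)"
    using step.hyps by (simp add: ts_def Let_def)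
  show ?case
  proof (cases "2 * Ncnt I (last ts) a \<le> Ncnt I (Suc n) a")
    case True
    have eq: "Ncnt I (Suc n) a = 2 ^ length ts"
      using True sucle lt lastN ne by (cases "length ts") auto
    have "\<forall>i<length (ts @ [Suc n]). Ncnt I ((ts @ [Suc n]) ! i) a = 2^i"
      using pw eq by (auto simp: nth_append less_Suc_eq)
    then show ?thesis using True ph eq by simp
  next
    case False
    then show ?thesis using ph ne pw by simp
  qed
qed



definition lo :: "nat \<Rightarrow> nat" where "lo k = (if k = 1 then 0 else 2^(k-2))"
definition hi :: "nat \<Rightarrow> nat" where "hi k = 2^(k-1)"
definition nk :: "nat \<Rightarrow> nat" where "nk k = hi k - lo k"
definition blk :: "(nat \<Rightarrow> nat \<Rightarrow> real) \<Rightarrow> nat \<Rightarrow> nat \<Rightarrow> real" where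
  "blk Z a k = (\<Sum>j\<in>{lo k..<hi k}. Z a j) / real (nk k)"

lemma nk_pos: "k \<ge> 1 \<Longrightarrow> nk k \<ge> 1"
proof -
  assume k: "k \<ge> 1"
  show ?thesis
  proof (cases "k = 1")
    case True then show ?thesis by (simp add: nk_def lo_def hi_def)
  next
    case False
    then obtain m where m: "k = Suc (Suc m)" using k by (cases k; cases "k - 1") auto
    then show ?thesis by (simp add: nk_def lo_def hi_def)
  qed
qed

lemma lo_le_hi: "lo k \<le> hi k"
  by (cases "k = 1") (auto simp: lo_def hi_def intro: power_increasing)

lemma sum_reindex:
  assumes "1 \<le> T'" "T' \<le> T"
  shows "(\<Sum>t\<in>{T'..<T}. if I t = a then Xr I Z t else 0) = (\<Sum>j\<in>{Ncnt I T' a..<Ncnt I T a}. Z a j)"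
  using assms(2)
proof (induction T rule: dec_induct)
  case base then show ?case by simp
next
  case (step T)
  have T1: "1 \<le> T" using step.hyps assms(1) by simp
  have mono: "Ncnt I T' a \<le> Ncnt I T a" using step.hyps(1) by (rule Ncnt_mono)
  show ?case
  proof (cases "I T = a")
    case True
    then show ?thesis using step.IH Ncnt_Suc[OF T1, of I a] step.hyps mono
      by (simp add: Xr_def)
  next
    case False
    then show ?thesis using step.IH Ncnt_Suc[OF T1, of I a] step.hyps by simp
  qed
qed

lemma mutil_eq:
  assumes base: "Ncnt I (K+1) a = 1" and n: "K + 1 \<le> n"
  shows "kph K I a n \<ge> 1 \<and> Ntil K I a n (kph K I a n) = nk (kph K I a n) \<and>
         mutil K \<epsilon> I Z W a n = blk Z a (kph K I a n) + W (kph K I a n) a / (\<epsilon> * real (nk (kph K I a n)))"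
proof -
  define ts where "ts = phst K I a n"
  define k where "k = length ts"
  have ne: "ts \<noteq> []" and pw: "\<forall>i<length ts. Ncnt I (ts ! i) a = 2^i"
    using phst_inv[OF base n] by (auto simp: ts_def)
  have k1: "k \<ge> 1" using ne by (simp add: k_def Suc_le_eq)
  have kph: "kph K I a n = k" by (simp add: kph_def k_def ts_def)
  have Thi: "Ncnt I (Tph K I a n k) a = hi k"
    using pw k1 ne by (simp add: Tph_def hi_def k_def ts_def[symmetric] nth_Cons' )
  have Tlo: "Ncnt I (Tph K I a n (k-1)) a = lo k"
  proof (cases "k = 1")
    case True then show ?thesis using Ncnt_1[of I a] by (simp add: Tph_def lo_def)
  next
    case False
    then have "k - 1 \<noteq> 0" "k - 1 - 1 < length ts" using k1 by (auto simp: k_def)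
    then show ?thesis using pw False by (simp add: Tph_def lo_def ts_def[symmetric] nth_Cons' numeral_2_eq_2 diff_Suc)
  qed
  have lt: "Tph K I a n (k-1) \<le> Tph K I a n k"
  proof (rule ccontr)
    assume "\<not> ?thesis"
    then have "Ncnt I (Tph K I a n k) a \<le> Ncnt I (Tph K I a n (k-1)) a" by (intro Ncnt_mono) simp
    then have "hi k \<le> lo k" using Thi Tlo by simp
    moreover have "lo k < hi k" using nk_pos[OF k1] lo_le_hi[of k] by (simp add: nk_def)
    ultimately show False by simp
  qed
  have T1: "1 \<le> Tph K I a n (k-1)"
  proof (cases "k = 1")
    case True then show ?thesis by (simp add: Tph_def)
  next
    case False
    then have "k - 1 \<noteq> 0" using k1 by linarith
    then have "Tph K I a n (k-1) = ts ! (k - 2)" by (simp add: Tph_def ts_def nth_Cons' numeral_2_eq_2)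
    moreover have "Ncnt I (ts ! (k-2)) a \<noteq> 0" using pw k1 by (simp add: k_def)
    ultimately show ?thesis by (cases "Tph K I a n (k-1)") (auto simp: Ncnt_def)
  qed
  have Ntil: "Ntil K I a n k = nk k" unfolding Ntil_def Thi Tlo nk_def ..
  have mh: "muhat K I Z a n k = blk Z a k"
    unfolding muhat_def blk_def Ntil using sum_reindex[OF T1 lt, of I a Z] Thi Tlo by simp
  show ?thesis using k1 Ntil mh by (simp add: kph mutil_def Let_def)
qed



lemma (in prob_space) subg_tail:
  fixes X :: "'i \<Rightarrow> 'a \<Rightarrow> real" and v :: "'i \<Rightarrow> real"
  assumes fin: "finite I" and ind: "indep_vars (\<lambda>_. borel) X I"
    and mgf: "\<And>i l. i \<in> I \<Longrightarrow> (\<integral>\<^sup>+x. ennreal (exp (l * X i x)) \<partial>M) \<le> ennreal (exp (l\<^sup>2 * v i / 2))"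
    and V: "(\<Sum>i\<in>I. v i) > 0" and t: "t > 0"
  shows "emeasure M {x\<in>space M. t \<le> (\<Sum>i\<in>I. X i x)} \<le> ennreal (exp (- t\<^sup>2 / (2 * (\<Sum>i\<in>I. v i))))"
proof -
  define d where "d = (\<Sum>i\<in>I. v i)"
  define l where "l = t / d"
  have d: "d > 0" using V by (simp add: d_def)
  have l: "l > 0" using t d by (simp add: l_def)
  have rv: "\<And>i. i \<in> I \<Longrightarrow> X i \<in> borel_measurable M" using ind by (auto simp: indep_vars_def)
  have sm: "(\<lambda>x. \<Sum>i\<in>I. X i x) \<in> borel_measurable M" using rv by (intro borel_measurable_sum) auto
  have "emeasure M {x\<in>space M. t \<le> (\<Sum>i\<in>I. X i x)} \<le>
      ennreal (exp (-l*t)) * (\<integral>\<^sup>+x. ennreal (exp (l * (\<Sum>i\<in>I. X i x))) * indicator (space M) x \<partial>M)"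
    by (intro Chernoff_ineq_nn_integral_ge l) (use sm in auto)
  also have "(\<integral>\<^sup>+x. ennreal (exp (l * (\<Sum>i\<in>I. X i x))) * indicator (space M) x \<partial>M) =
             (\<integral>\<^sup>+x. (\<Prod>i\<in>I. ennreal (exp (l * X i x))) \<partial>M)"
    by (intro nn_integral_cong)
       (simp_all add: sum_distrib_left exp_sum fin prod_ennreal)
  also have "\<dots> = (\<Prod>i\<in>I. \<integral>\<^sup>+x. ennreal (exp (l * X i x)) \<partial>M)"
    by (intro indep_vars_nn_integral fin indep_vars_compose2[OF ind]) auto
  also have "ennreal (exp (-l * t)) * \<dots> \<le>
               ennreal (exp (-l * t)) * (\<Prod>i\<in>I. ennreal (exp (l\<^sup>2 * v i / 2)))"
    by (intro mult_left_mono prod_mono_ennreal mgf) auto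
  also have "\<dots> = ennreal (exp (-l*t) * (\<Prod>i\<in>I. exp (l\<^sup>2 * v i / 2)))"
    by (simp add: prod_ennreal prod_nonneg flip: ennreal_mult)
  also have "exp (-l*t) * (\<Prod>i\<in>I. exp (l\<^sup>2 * v i / 2)) = exp (d * l\<^sup>2 / 2 - l * t)"
    by (simp add: exp_diff exp_minus sum_divide_distrib sum_distrib_left
                  sum_distrib_right exp_sum fin divide_simps mult_ac d_def)
  also have "d * l\<^sup>2 / 2 - l * t = - t\<^sup>2 / (2 * d)"
    using d by (simp add: l_def field_simps power2_eq_square)
  finally show ?thesis by (simp add: d_def)
qed

lemma (in prob_space) mgf_single:
  assumes Zm: "Z \<in> borel_measurable M" and dZ: "distr M borel Z = \<nu>" and sg: "subgauss1 \<nu>"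
  shows "(\<integral>\<^sup>+x. ennreal (exp (l * (c * (Z x - (\<integral>y. y \<partial>\<nu>))))) \<partial>M) \<le> ennreal (exp (l\<^sup>2 * c\<^sup>2 / 2))"
proof -
  define \<mu> where "\<mu> = (\<integral>y. y \<partial>\<nu>)"
  have sets: "sets \<nu> = sets borel" and int: "integrable \<nu> (\<lambda>x. exp ((l*c) * (x - \<mu>)))"
    and bnd: "(\<integral>x. exp ((l*c) * (x - \<mu>)) \<partial>\<nu>) \<le> exp ((l*c)\<^sup>2 / 2)"
    using sg unfolding subgauss1_def \<mu>_def by auto
  have "(\<integral>\<^sup>+x. ennreal (exp (l * (c * (Z x - \<mu>)))) \<partial>M) =
        (\<integral>\<^sup>+y. ennreal (exp ((l*c) * (y - \<mu>))) \<partial>distr M borel Z)"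
    by (subst nn_integral_distr[OF Zm]) (auto simp: mult.assoc)
  also have "\<dots> = (\<integral>\<^sup>+y. ennreal (exp ((l*c) * (y - \<mu>))) \<partial>\<nu>)" using dZ by simp
  also have "\<dots> = ennreal (\<integral>y. exp ((l*c) * (y - \<mu>)) \<partial>\<nu>)"
    by (rule nn_integral_eq_integral[OF int]) auto
  also have "\<dots> \<le> ennreal (exp (l\<^sup>2 * c\<^sup>2 / 2))"
    using bnd by (simp add: power_mult_distrib)
  finally show ?thesis by (simp add: \<mu>_def)
qed

lemma laplace_tail:
  assumes L: "0 \<le> L"
  shows "emeasure (density lborel laplace1) {x. L < \<bar>x\<bar>} \<le> ennreal (exp (- L))"
proof -
  define f where "f x = ennreal (exp (- \<bar>x\<bar>) / 2)" for x :: real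
  have fm: "f \<in> borel_measurable borel" unfolding f_def by measurable
  have hi: "((\<lambda>x::real. exp (- x) / 2) has_integral (exp (- L) / 2)) {L..}"
    using has_integral_divide[OF has_integral_exp_minus_to_infinity[of 1 L], of 2] by simp
  have hi': "((\<lambda>x::real. exp (- \<bar>x\<bar>) / 2) has_integral (exp (- L) / 2)) {L..}"
    by (rule has_integral_spike_eq[THEN iffD1, OF negligible_empty _ hi]) (use L in auto)
  have right: "(\<integral>\<^sup>+x. f x * indicator {L..} x \<partial>lborel) = ennreal (exp (- L) / 2)"
    unfolding f_def by (rule nn_integral_has_integral_lebesgue'[OF _ hi']) auto
  have left: "(\<integral>\<^sup>+x. f x * indicator {..-L} x \<partial>lborel) = (\<integral>\<^sup>+x. f x * indicator {L..} x \<partial>lborel)"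
  proof -
    have "(\<integral>\<^sup>+x. f x * indicator {..-L} x \<partial>lborel) =
          (\<integral>\<^sup>+x. f x * indicator {..-L} x \<partial>distr lborel borel uminus)"
      by (simp add: lborel_distr_uminus)
    also have "\<dots> = (\<integral>\<^sup>+x. f (-x) * indicator {..-L} (-x) \<partial>lborel)"
      by (rule nn_integral_distr) (use fm in auto)
    also have "\<dots> = (\<integral>\<^sup>+x. f x * indicator {L..} x \<partial>lborel)"
      by (intro nn_integral_cong) (auto simp: f_def indicator_def)
    finally show ?thesis .
  qed
  have "emeasure (density lborel laplace1) {x. L < \<bar>x\<bar>} = (\<integral>\<^sup>+x. f x * indicator {x. L < \<bar>x\<bar>} x \<partial>lborel)"
  proof -
    have "laplace1 = f" by (simp add: fun_eq_iff laplace1_def f_def)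
    then show ?thesis using fm by (subst emeasure_density) auto
  qed
  also have "\<dots> \<le> (\<integral>\<^sup>+x. f x * indicator {L..} x + f x * indicator {..-L} x \<partial>lborel)"
    by (intro nn_integral_mono) (auto simp: indicator_def)
  also have "\<dots> = (\<integral>\<^sup>+x. f x * indicator {L..} x \<partial>lborel) + (\<integral>\<^sup>+x. f x * indicator {..-L} x \<partial>lborel)"
    by (rule nn_integral_add) (use fm in auto)
  also have "\<dots> = ennreal (exp (- L))"
    using left right by (simp flip: ennreal_plus)
  finally show ?thesis .
qed



lemma zeta_summable: "1 < s \<Longrightarrow> summable (\<lambda>n. 1 / real (Suc n) powr s)"
proof -
  assume s: "1 < s"
  have "summable (\<lambda>n. real n powr (-s))" using s by (simp add: summable_real_powr_iff)
  then have "summable (\<lambda>n. real (Suc n) powr (-s))" by (subst summable_Suc_iff)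
  then show ?thesis by (simp add: powr_minus_divide)
qed

lemma zeta_ge1: "1 < s \<Longrightarrow> zeta_r s \<ge> 1"
proof -
  assume s: "1 < s"
  have "1 / real (Suc 0) powr s \<le> (\<Sum>n. 1 / real (Suc n) powr s)"
    using sum_le_suminf[OF zeta_summable[OF s], of "{0}"] by auto
  then show ?thesis by (simp add: zeta_r_def)
qed

lemma gG_lb: assumes "1/2 < l" "l < 1" shows "gG l \<ge> 2 * l - 2 * l * ln (4 * l)"
proof -
  have "ln (zeta_r (2*l)) \<ge> 0" using zeta_ge1[of "2*l"] assms by simp
  moreover have "ln (1 - l) \<le> 0" using assms by simp
  ultimately show ?thesis by (simp add: gG_def)
qed

lemma CG_lb: assumes x: "0 \<le> x" shows "CG x \<ge> x + 2 - 2 * ln 4"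
  unfolding CG_def
proof (rule cINF_greatest)
  show "{1/2<..<(1::real)} \<noteq> {}" by (auto intro!: exI[of _ "3/4"])
next
  fix l :: real assume "l \<in> {1/2<..<1}"
  then have l: "1/2 < l" "l < 1" by auto
  have "ln (4 * l) \<le> ln 4" using l by simp
  moreover have "x \<le> x / l" using l x by (simp add: field_simps mult_left_le_one_le)
  moreover have "(gG l + x) / l \<ge> (2 * l - 2 * l * ln (4 * l) + x) / l"
    using gG_lb[OF l] l by (intro divide_right_mono) auto
  moreover have "(2 * l - 2 * l * ln (4 * l) + x) / l = 2 - 2 * ln (4*l) + x / l"
    using l by (simp add: field_simps)
  ultimately show "x + 2 - 2 * ln 4 \<le> (gG l + x) / l" by linarith
qed

lemma ck_lb:
  assumes K: "2 \<le> K" and s: "1 < s" and d: "0 < d" "d < 1" and k: "1 \<le> k"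
    and n: "1 \<le> n" and m: "1 \<le> m"
  shows "c_k K s k n m d \<ge> ln (real (K - 1) * (zeta_r s)\<^sup>2 * real k powr s / d) + 4"
proof -
  define L where "L = ln (real (K - 1) * (zeta_r s)\<^sup>2 * real k powr s / d)"
  have z: "zeta_r s \<ge> 1" using zeta_ge1[OF s] .
  define X where "X = real (K - 1) * (zeta_r s)\<^sup>2 * real k powr s"
  have "X \<ge> 1 * 1 * 1" unfolding X_def
    using K z k s by (intro mult_mono) (auto simp: one_le_power intro!: ge_one_powr_ge_zero)
  then have "X / d \<ge> 1" using d by (simp add: pos_le_divide_eq)
  then have "real (K - 1) * (zeta_r s)\<^sup>2 * real k powr s / d \<ge> 1" unfolding X_def .
  then have L0: "L \<ge> 0" unfolding L_def by (rule ln_ge_zero)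
  have "CG (1/2 * L) \<ge> 1/2 * L + 2 - 2 * ln 4" using CG_lb L0 by simp
  moreover have "ln (4 + ln n) \<ge> ln 4" proof - have "0 \<le> ln n" using n by simp then show ?thesis by simp qed
  moreover have "ln (4 + ln m) \<ge> ln 4" proof - have "0 \<le> ln m" using m by simp then show ?thesis by simp qed
  ultimately show ?thesis unfolding c_k_def L_def[symmetric] by linarith
qed



lemma key_ineq:
  fixes B1 B2 W1 W2 mua mub eps n1 n2 c L1 L2 :: real
  assumes n1: "n1 \<ge> 1" and n2: "n2 \<ge> 1" and eps: "eps > 0"
    and ge: "B1 + W1 / (eps * n1) \<ge> B2 + W2 / (eps * n2)"
    and st: "(B1 + W1 / (eps * n1) - (B2 + W2 / (eps * n2)))\<^sup>2 / (1/n1 + 1/n2)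
             \<ge> 2 * (2 * c + 1 / (n1 * eps\<^sup>2) * L1\<^sup>2 + 1 / (n2 * eps\<^sup>2) * L2\<^sup>2)"
    and w1: "\<bar>W1\<bar> \<le> L1" and w2: "\<bar>W2\<bar> \<le> L2" and mu: "mua < mub"
  shows "((B1 - mua) - (B2 - mub))\<^sup>2 \<ge> 2 * (1/n1 + 1/n2) * c"
proof -
  define \<sigma> where "\<sigma> = 1/n1 + 1/n2"
  have sp: "\<sigma> > 0" using n1 n2 by (simp add: \<sigma>_def add_pos_pos)
  define D where "D = B1 + W1 / (eps * n1) - (B2 + W2 / (eps * n2))"
  define u1 where "u1 = W1 / (eps * n1)"
  define u2 where "u2 = W2 / (eps * n2)"
  define v1 where "v1 = L1 / (eps * n1)"
  define v2 where "v2 = L2 / (eps * n2)"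
  define Y where "Y = u1 - u2"
  define G where "G = (B1 - mua) - (B2 - mub)"
  define Bp where "Bp = 1 / (n1 * eps\<^sup>2) * L1\<^sup>2 + 1 / (n2 * eps\<^sup>2) * L2\<^sup>2"
  have D0: "D \<ge> 0" using ge by (simp add: D_def)
  have G: "G = (D + (mub - mua)) - Y" by (simp add: G_def D_def Y_def u1_def u2_def)
  have st0: "D\<^sup>2 / \<sigma> \<ge> 2 * (2 * c + Bp)"
    using st unfolding D_def \<sigma>_def Bp_def by (simp add: add.assoc)
  have st': "D\<^sup>2 \<ge> \<sigma> * (4 * c + 2 * Bp)"
  proof -
    have "2 * (2 * c + Bp) \<le> D\<^sup>2 / \<sigma>" by (rule st0)
    then have "2 * (2 * c + Bp) * \<sigma> \<le> D\<^sup>2" using sp by (simp add: pos_le_divide_eq)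
    then show ?thesis by (simp add: algebra_simps)
  qed
  have en1: "eps * n1 > 0" using eps n1 by simp
  have en2: "eps * n2 > 0" using eps n2 by simp
  have a1: "\<bar>u1\<bar> \<le> v1" unfolding u1_def v1_def using w1 en1 by (simp add: abs_divide divide_right_mono)
  have a2: "\<bar>u2\<bar> \<le> v2" unfolding u2_def v2_def using w2 en2 by (simp add: abs_divide divide_right_mono)
  have Yb: "\<bar>Y\<bar> \<le> v1 + v2"
  proof -
    have "\<bar>Y\<bar> \<le> \<bar>u1\<bar> + \<bar>u2\<bar>" unfolding Y_def by (rule abs_triangle_ineq4)
    then show ?thesis using a1 a2 by linarith
  qed
  have b1: "1 / (n1 * eps\<^sup>2) * L1\<^sup>2 = n1 * v1\<^sup>2"
    unfolding v1_def using n1 eps by (simp add: power2_eq_square divide_simps)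
  have b2: "1 / (n2 * eps\<^sup>2) * L2\<^sup>2 = n2 * v2\<^sup>2"
    unfolding v2_def using n2 eps by (simp add: power2_eq_square divide_simps)
  have e: "\<sigma> * Bp = v1\<^sup>2 + v2\<^sup>2 + (n2/n1) * v2\<^sup>2 + (n1/n2) * v1\<^sup>2"
    unfolding Bp_def b1 b2 \<sigma>_def using n1 n2 by (simp add: divide_simps) (simp add: algebra_simps)
  have q: "(n2/n1) * v2\<^sup>2 + (n1/n2) * v1\<^sup>2 - 2 * v1 * v2 = (n2 * v2 - n1 * v1)\<^sup>2 / (n1 * n2)"
    using n1 n2 by (simp add: divide_simps power2_eq_square) (simp add: algebra_simps)
  have "(n2 * v2 - n1 * v1)\<^sup>2 / (n1 * n2) \<ge> 0" using n1 n2 by simp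
  then have "2 * v1 * v2 \<le> (n2/n1) * v2\<^sup>2 + (n1/n2) * v1\<^sup>2" using q by linarith
  then have CS: "(v1 + v2)\<^sup>2 \<le> \<sigma> * Bp" unfolding e by (simp add: power2_sum)
  have Y2: "Y\<^sup>2 \<le> \<sigma> * Bp"
  proof -
    have "Y\<^sup>2 = \<bar>Y\<bar>\<^sup>2" by simp
    also have "\<dots> \<le> (v1 + v2)\<^sup>2" using Yb by (intro power_mono) auto
    finally show ?thesis using CS by linarith
  qed
  have E: "D + (mub - mua) \<ge> D" using mu by simp
  have s1: "D\<^sup>2 \<le> (D + (mub - mua))\<^sup>2" using E D0 by (intro power_mono) auto
  have s2: "(D + (mub - mua))\<^sup>2 = (G + Y)\<^sup>2" by (simp add: G)
  have s3: "2 * G\<^sup>2 + 2 * Y\<^sup>2 - (G + Y)\<^sup>2 = (G - Y)\<^sup>2" by (simp add: power2_eq_square algebra_simps)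
  have "(G - Y)\<^sup>2 \<ge> 0" by simp
  then have "\<sigma> * (4 * c + 2 * Bp) \<le> 2 * G\<^sup>2 + 2 * Y\<^sup>2" using st' s1 s2 s3 by linarith
  then have "G\<^sup>2 \<ge> 2 * \<sigma> * c" using Y2 by (simp add: algebra_simps)
  then show ?thesis by (simp add: G_def \<sigma>_def)
qed



lemma (in prob_space) subg_tail_abs:
  fixes X :: "'i \<Rightarrow> 'a \<Rightarrow> real" and v :: "'i \<Rightarrow> real"
  assumes fin: "finite I" and ind: "indep_vars (\<lambda>_. borel) X I"
    and mgf: "\<And>i l. i \<in> I \<Longrightarrow> (\<integral>\<^sup>+x. ennreal (exp (l * X i x)) \<partial>M) \<le> ennreal (exp (l\<^sup>2 * v i / 2))"
    and V: "(\<Sum>i\<in>I. v i) > 0" and t: "t > 0"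
  shows "emeasure M {x\<in>space M. t \<le> \<bar>\<Sum>i\<in>I. X i x\<bar>} \<le> ennreal (2 * exp (- t\<^sup>2 / (2 * (\<Sum>i\<in>I. v i))))"
proof -
  have rv: "\<And>i. i \<in> I \<Longrightarrow> X i \<in> borel_measurable M" using ind by (auto simp: indep_vars_def)
  have sm: "(\<lambda>x. \<Sum>i\<in>I. X i x) \<in> borel_measurable M" using rv by (intro borel_measurable_sum) auto
  have ind2: "indep_vars (\<lambda>_. borel) (\<lambda>i x. - X i x) I"
    by (rule indep_vars_compose2[OF ind]) auto
  have mgf2: "(\<integral>\<^sup>+x. ennreal (exp (l * - X i x)) \<partial>M) \<le> ennreal (exp (l\<^sup>2 * v i / 2))" if "i \<in> I" for i l
    using mgf[OF that, of "-l"] by simp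
  have t1: "emeasure M {x\<in>space M. t \<le> (\<Sum>i\<in>I. X i x)} \<le> ennreal (exp (- t\<^sup>2 / (2 * (\<Sum>i\<in>I. v i))))"
    by (rule subg_tail[OF fin ind mgf V t])
  have t2: "emeasure M {x\<in>space M. t \<le> (\<Sum>i\<in>I. - X i x)} \<le> ennreal (exp (- t\<^sup>2 / (2 * (\<Sum>i\<in>I. v i))))"
    by (rule subg_tail[OF fin ind2 mgf2 V t])
  have A1: "{x\<in>space M. t \<le> (\<Sum>i\<in>I. X i x)} \<in> sets M" using sm by measurable
  have A2: "{x\<in>space M. t \<le> (\<Sum>i\<in>I. - X i x)} \<in> sets M" using sm by (simp add: sum_negf) measurable
  have "emeasure M {x\<in>space M. t \<le> \<bar>\<Sum>i\<in>I. X i x\<bar>} \<le>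
        emeasure M ({x\<in>space M. t \<le> (\<Sum>i\<in>I. X i x)} \<union> {x\<in>space M. t \<le> (\<Sum>i\<in>I. - X i x)})"
    by (rule emeasure_mono) (use A1 A2 in \<open>auto simp: sum_negf abs_if split: if_splits\<close>)
  also have "\<dots> \<le> emeasure M {x\<in>space M. t \<le> (\<Sum>i\<in>I. X i x)} + emeasure M {x\<in>space M. t \<le> (\<Sum>i\<in>I. - X i x)}"
    by (rule emeasure_subadditive[OF A1 A2])
  also have "\<dots> \<le> ennreal (exp (- t\<^sup>2 / (2 * (\<Sum>i\<in>I. v i)))) + ennreal (exp (- t\<^sup>2 / (2 * (\<Sum>i\<in>I. v i))))"
    by (rule add_mono[OF t1 t2])
  also have "\<dots> = ennreal (2 * exp (- t\<^sup>2 / (2 * (\<Sum>i\<in>I. v i))))"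
    by (simp flip: ennreal_plus)
  finally show ?thesis .
qed

lemma (in prob_space) gauss_event:
  fixes Z :: "nat \<Rightarrow> nat \<Rightarrow> 'a \<Rightarrow> real" and F :: "bool \<times> nat \<times> nat \<Rightarrow> 'a \<Rightarrow> real"
    and \<nu> :: "nat \<Rightarrow> real measure"
  assumes ind: "indep_vars (\<lambda>_. borel) F IS"
    and FZ: "\<And>i j. F (True, i, j) = Z i j"
    and subA: "\<And>j. (True, a, j) \<in> IS" and subB: "\<And>j. (True, b, j) \<in> IS"
    and ab: "a \<noteq> b"
    and dA: "\<And>j. distr M borel (Z a j) = \<nu> a" and dB: "\<And>j. distr M borel (Z b j) = \<nu> b"
    and sA: "subgauss1 (\<nu> a)" and sB: "subgauss1 (\<nu> b)"
    and k1: "1 \<le> k1" and k2: "1 \<le> k2" and x: "0 < x"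
  shows "emeasure M {\<omega>\<in>space M. 2 * (1 / real (nk k1) + 1 / real (nk k2)) * x \<le>
           ((blk (\<lambda>i j. Z i j \<omega>) a k1 - (\<integral>y. y \<partial>\<nu> a)) - (blk (\<lambda>i j. Z i j \<omega>) b k2 - (\<integral>y. y \<partial>\<nu> b)))\<^sup>2}
         \<le> ennreal (2 * exp (- x))"
proof -
  define n1 where "n1 = real (nk k1)"
  define n2 where "n2 = real (nk k2)"
  have n1: "n1 \<ge> 1" using nk_pos[OF k1] by (simp add: n1_def)
  have n2: "n2 \<ge> 1" using nk_pos[OF k2] by (simp add: n2_def)
  define B1 where "B1 = {lo k1..<hi k1}"
  define B2 where "B2 = {lo k2..<hi k2}"
  have cB1: "card B1 = nk k1" by (simp add: B1_def nk_def)
  have cB2: "card B2 = nk k2" by (simp add: B2_def nk_def)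
  define J where "J = (\<lambda>j. (True, a, j)) ` B1 \<union> (\<lambda>j. (True, b, j)) ` B2"
  define c where "c i = (if i = a then 1 / n1 else - 1 / n2)" for i
  define m where "m i = (if i = a then (\<integral>y. y \<partial>\<nu> a) else (\<integral>y. y \<partial>\<nu> b))" for i
  define X where "X p \<omega> = c (fst (snd p)) * (F p \<omega> - m (fst (snd p)))" for p :: "bool \<times> nat \<times> nat" and \<omega>
  define v where "v p = (c (fst (snd p)))\<^sup>2" for p :: "bool \<times> nat \<times> nat"
  have finJ: "finite J" by (simp add: J_def B1_def B2_def)
  have JIS: "J \<subseteq> IS" using subA subB by (auto simp: J_def)
  have indJ: "indep_vars (\<lambda>_. borel) X J"
    unfolding X_def by (rule indep_vars_compose2[OF indep_vars_subset[OF ind JIS]]) auto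
  have mgf: "(\<integral>\<^sup>+\<omega>. ennreal (exp (l * X p \<omega>)) \<partial>M) \<le> ennreal (exp (l\<^sup>2 * v p / 2))" if p: "p \<in> J" for p l
  proof -
    obtain i j where pij: "p = (True, i, j)" and i: "i = a \<or> i = b" using p by (auto simp: J_def)
    have "F (True, i, j) \<in> borel_measurable M"
      using ind JIS p unfolding indep_vars_def pij by auto
    then have Zm: "Z i j \<in> borel_measurable M" by (simp add: FZ)
    have dZ: "distr M borel (Z i j) = \<nu> i" using i dA dB by auto
    have sg: "subgauss1 (\<nu> i)" using i sA sB by auto
    have mi: "m i = (\<integral>y. y \<partial>\<nu> i)" using i by (auto simp: m_def)
    show ?thesis
      using mgf_single[OF Zm dZ sg, of l "c i"] by (simp add: X_def v_def pij FZ mi)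
  qed
  have disj: "(\<lambda>j. (True, a, j)) ` B1 \<inter> (\<lambda>j. (True, b, j)) ` B2 = {}" using ab by auto
  have injA: "inj_on (\<lambda>j. (True, a, j)) B1" by (auto simp: inj_on_def)
  have injB: "inj_on (\<lambda>j. (True, b, j)) B2" by (auto simp: inj_on_def)
  have sumJ: "(\<Sum>p\<in>J. g p) = (\<Sum>j\<in>B1. g (True, a, j)) + (\<Sum>j\<in>B2. g (True, b, j))" for g :: "_ \<Rightarrow> real"
  proof -
    have f1: "finite ((\<lambda>j. (True, a, j)) ` B1)" "finite ((\<lambda>j. (True, b, j)) ` B2)"
      by (simp_all add: B1_def B2_def)
    show ?thesis unfolding J_def sum.union_disjoint[OF f1 disj]
      by (simp add: sum.reindex[OF injA] sum.reindex[OF injB])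
  qed
  have V: "(\<Sum>p\<in>J. v p) = 1/n1 + 1/n2"
    unfolding sumJ using cB1 cB2 ab n1 n2 by (simp add: v_def c_def n1_def n2_def power2_eq_square)
  have Vp: "(\<Sum>p\<in>J. v p) > 0" unfolding V using n1 n2 by (simp add: add_pos_pos)
  define t where "t = sqrt (2 * (1/n1 + 1/n2) * x)"
  have tp: "t > 0" unfolding t_def using n1 n2 x by (simp add: add_pos_pos)
  have tsq: "t\<^sup>2 = 2 * (1/n1 + 1/n2) * x" unfolding t_def using n1 n2 x by (simp add: add_pos_pos)
  have sumX: "(\<Sum>p\<in>J. X p \<omega>) = (blk (\<lambda>i j. Z i j \<omega>) a k1 - (\<integral>y. y \<partial>\<nu> a)) - (blk (\<lambda>i j. Z i j \<omega>) b k2 - (\<integral>y. y \<partial>\<nu> b))" for \<omega>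
  proof -
    have "(\<Sum>p\<in>J. X p \<omega>) = (\<Sum>j\<in>B1. (Z a j \<omega> - (\<integral>y. y \<partial>\<nu> a)) / n1) + (\<Sum>j\<in>B2. - ((Z b j \<omega> - (\<integral>y. y \<partial>\<nu> b)) / n2))"
      unfolding sumJ using ab by (simp add: X_def c_def m_def FZ)
    also have "\<dots> = ((\<Sum>j\<in>B1. Z a j \<omega>) / n1 - (\<integral>y. y \<partial>\<nu> a)) - ((\<Sum>j\<in>B2. Z b j \<omega>) / n2 - (\<integral>y. y \<partial>\<nu> b))"
      using n1 n2 cB1 cB2 by (simp add: sum_divide_distrib[symmetric] sum_subtractf sum_negf n1_def n2_def diff_divide_distrib)
    finally show ?thesis by (simp add: blk_def B1_def B2_def n1_def n2_def)
  qed
  have Xm: "(\<lambda>\<omega>. \<Sum>p\<in>J. X p \<omega>) \<in> borel_measurable M"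
    using indJ by (intro borel_measurable_sum) (auto simp: indep_vars_def)
  have "emeasure M {\<omega>\<in>space M. 2 * (1 / real (nk k1) + 1 / real (nk k2)) * x \<le>
           ((blk (\<lambda>i j. Z i j \<omega>) a k1 - (\<integral>y. y \<partial>\<nu> a)) - (blk (\<lambda>i j. Z i j \<omega>) b k2 - (\<integral>y. y \<partial>\<nu> b)))\<^sup>2}
        \<le> emeasure M {\<omega>\<in>space M. t \<le> \<bar>\<Sum>p\<in>J. X p \<omega>\<bar>}"
  proof (rule emeasure_mono)
    show "{\<omega>\<in>space M. t \<le> \<bar>\<Sum>p\<in>J. X p \<omega>\<bar>} \<in> sets M" using Xm by measurable
  next
    show "{\<omega>\<in>space M. 2 * (1 / real (nk k1) + 1 / real (nk k2)) * x \<le>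
           ((blk (\<lambda>i j. Z i j \<omega>) a k1 - (\<integral>y. y \<partial>\<nu> a)) - (blk (\<lambda>i j. Z i j \<omega>) b k2 - (\<integral>y. y \<partial>\<nu> b)))\<^sup>2}
          \<subseteq> {\<omega>\<in>space M. t \<le> \<bar>\<Sum>p\<in>J. X p \<omega>\<bar>}"
    proof (safe)
      fix \<omega> assume "\<omega> \<in> space M" and h: "2 * (1 / real (nk k1) + 1 / real (nk k2)) * x \<le>
           ((blk (\<lambda>i j. Z i j \<omega>) a k1 - (\<integral>y. y \<partial>\<nu> a)) - (blk (\<lambda>i j. Z i j \<omega>) b k2 - (\<integral>y. y \<partial>\<nu> b)))\<^sup>2"
      then have "t\<^sup>2 \<le> (\<Sum>p\<in>J. X p \<omega>)\<^sup>2" unfolding tsq sumX by (simp add: n1_def n2_def)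
      then have "t\<^sup>2 \<le> \<bar>\<Sum>p\<in>J. X p \<omega>\<bar>\<^sup>2" by simp
      then show "t \<le> \<bar>\<Sum>p\<in>J. X p \<omega>\<bar>" using tp by (meson abs_ge_zero power2_le_imp_le)
    qed
  qed
  also have "\<dots> \<le> ennreal (2 * exp (- t\<^sup>2 / (2 * (\<Sum>p\<in>J. v p))))"
    by (rule subg_tail_abs[OF finJ indJ mgf Vp tp])
  also have "- t\<^sup>2 / (2 * (\<Sum>p\<in>J. v p)) = - x"
  proof -
    have pos: "1/n1 + 1/n2 > 0" using n1 n2 by (simp add: add_pos_pos)
    have "- t\<^sup>2 / (2 * (\<Sum>p\<in>J. v p)) = - (2 * (1/n1 + 1/n2) * x) / (2 * (1/n1 + 1/n2))"
      unfolding tsq V ..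
    also have "\<dots> = - x" using pos by simp
    finally show ?thesis .
  qed
  finally show ?thesis .
qed



lemma ahat_prop:
  assumes K: "0 < K"
  shows "ahat K \<epsilon> I Z W n < K \<and> (\<forall>b<K. mutil K \<epsilon> I Z W b n \<le> mutil K \<epsilon> I Z W (ahat K \<epsilon> I Z W n) n)"
proof -
  define f where "f b = mutil K \<epsilon> I Z W b n" for b
  have ne: "f ` {..<K} \<noteq> {}" using K by auto
  have "Max (f ` {..<K}) \<in> f ` {..<K}" using ne by (intro Max_in) auto
  then obtain a where a: "a < K" "f a = Max (f ` {..<K})" by auto
  have "\<forall>b<K. f b \<le> f a" using a by (auto intro: Max_ge)
  then have ex: "\<exists>a. a < K \<and> (\<forall>b<K. f b \<le> f a)" using a by blast
  show ?thesis unfolding ahat_def f_def[symmetric] by (rule LeastI_ex[OF ex])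
qed

lemma wrong_stop_cases:
  fixes I :: "nat \<Rightarrow> nat" and Z W :: "nat \<Rightarrow> nat \<Rightarrow> real" and \<mu> :: "nat \<Rightarrow> real"
  assumes K: "0 < K" and base: "\<forall>a<K. Ncnt I (K+1) a = 1" and as: "astar < K"
    and mu: "\<forall>a<K. a \<noteq> astar \<longrightarrow> \<mu> a < \<mu> astar"
    and \<epsilon>: "0 < \<epsilon>" and \<delta>: "0 < \<delta>" "\<delta> < 1" and s: "1 < s"
    and ws: "wrong_stop K s \<epsilon> \<delta> I Z W astar"
  shows "\<exists>a k1 k2. a < K \<and> a \<noteq> astar \<and> 1 \<le> k1 \<and> 1 \<le> k2 \<and>
          (ln (2 * real K * real k1 powr s * zeta_r s / \<delta>) < \<bar>W k1 a\<bar> \<or>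
           ln (2 * real K * real k2 powr s * zeta_r s / \<delta>) < \<bar>W k2 astar\<bar> \<or>
           2 * (1 / real (nk k1) + 1 / real (nk k2)) *
             ln (4 * real (K - 1) * (zeta_r s)\<^sup>2 * real k1 powr s * real k2 powr s / \<delta>)
           \<le> ((blk Z a k1 - \<mu> a) - (blk Z astar k2 - \<mu> astar))\<^sup>2)"
proof -
  define n0 where "n0 = (LEAST n. stops K s \<epsilon> \<delta> I Z W n)"
  have ex: "\<exists>n. stops K s \<epsilon> \<delta> I Z W n" and wa: "ahat K \<epsilon> I Z W n0 \<noteq> astar"
    using ws by (auto simp: wrong_stop_def n0_def)
  have st: "stops K s \<epsilon> \<delta> I Z W n0" unfolding n0_def by (rule LeastI_ex[OF ex])
  define a where "a = ahat K \<epsilon> I Z W n0"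
  have aK: "a < K" and amax: "\<forall>b<K. mutil K \<epsilon> I Z W b n0 \<le> mutil K \<epsilon> I Z W a n0"
    using ahat_prop[OF K] by (auto simp: a_def)
  have aa: "a \<noteq> astar" using wa by (simp add: a_def)
  have n0: "K + 1 \<le> n0" using st by (simp add: stops_def)
  have cond: "(mutil K \<epsilon> I Z W a n0 - mutil K \<epsilon> I Z W astar n0)\<^sup>2
          / (1 / real (Ntil K I a n0 (kph K I a n0)) + 1 / real (Ntil K I astar n0 (kph K I astar n0)))
        \<ge> 2 * c_eps K s \<epsilon> (kph K I a n0) (kph K I astar n0)
               (Ntil K I a n0 (kph K I a n0)) (Ntil K I astar n0 (kph K I astar n0)) \<delta>"
    using st as aa unfolding stops_def a_def[symmetric] Let_def by auto
  define k1 where "k1 = kph K I a n0"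
  define k2 where "k2 = kph K I astar n0"
  have m1: "k1 \<ge> 1 \<and> Ntil K I a n0 k1 = nk k1 \<and>
         mutil K \<epsilon> I Z W a n0 = blk Z a k1 + W k1 a / (\<epsilon> * real (nk k1))"
    unfolding k1_def by (rule mutil_eq[OF _ n0]) (use base aK in auto)
  have m2: "k2 \<ge> 1 \<and> Ntil K I astar n0 k2 = nk k2 \<and>
         mutil K \<epsilon> I Z W astar n0 = blk Z astar k2 + W k2 astar / (\<epsilon> * real (nk k2))"
    unfolding k2_def by (rule mutil_eq[OF _ n0]) (use base as in auto)
  define n1 where "n1 = real (nk k1)"
  define n2 where "n2 = real (nk k2)"
  have n1: "n1 \<ge> 1" using nk_pos m1 by (simp add: n1_def)
  have n2: "n2 \<ge> 1" using nk_pos m2 by (simp add: n2_def)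
  define L1 where "L1 = ln (2 * real K * real k1 powr s * zeta_r s / \<delta>)"
  define L2 where "L2 = ln (2 * real K * real k2 powr s * zeta_r s / \<delta>)"
  define c where "c = c_k K s (k1 * k2) n1 n2 (\<delta> / 2)"
  have ge: "blk Z a k1 + W k1 a / (\<epsilon> * n1) \<ge> blk Z astar k2 + W k2 astar / (\<epsilon> * n2)"
    using amax as m1 m2 by (auto simp: n1_def n2_def)
  have cond': "(blk Z a k1 + W k1 a / (\<epsilon> * n1) - (blk Z astar k2 + W k2 astar / (\<epsilon> * n2)))\<^sup>2 / (1/n1 + 1/n2)
             \<ge> 2 * (2 * c + 1 / (n1 * \<epsilon>\<^sup>2) * L1\<^sup>2 + 1 / (n2 * \<epsilon>\<^sup>2) * L2\<^sup>2)"
    using cond m1 m2 unfolding k1_def[symmetric] k2_def[symmetric]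
    by (simp add: n1_def n2_def c_def L1_def L2_def c_eps_def)
  have K2: "2 \<le> K" using aK as aa by linarith
  show ?thesis
  proof (cases "L1 < \<bar>W k1 a\<bar> \<or> L2 < \<bar>W k2 astar\<bar>")
    case True
    then show ?thesis using aK aa m1 m2 unfolding L1_def L2_def by blast
  next
    case False
    then have w1: "\<bar>W k1 a\<bar> \<le> L1" and w2: "\<bar>W k2 astar\<bar> \<le> L2" by auto
    have G: "((blk Z a k1 - \<mu> a) - (blk Z astar k2 - \<mu> astar))\<^sup>2 \<ge> 2 * (1/n1 + 1/n2) * c"
      by (rule key_ineq[OF n1 n2 \<epsilon> ge cond' w1 w2]) (use mu aK aa in auto)
    have k12: "1 \<le> k1 * k2" using m1 m2 by simp
    have cl: "c \<ge> ln (real (K - 1) * (zeta_r s)\<^sup>2 * real (k1 * k2) powr s / (\<delta> / 2)) + 4"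
      unfolding c_def by (rule ck_lb[OF K2 s _ _ k12 n1 n2]) (use \<delta> in auto)
    define X where "X = real (K - 1) * (zeta_r s)\<^sup>2 * real k1 powr s * real k2 powr s"
    have Xp: "X > 0" unfolding X_def using K2 zeta_ge1[OF s] m1 m2 by (auto intro!: mult_pos_pos)
    have e1: "real (K - 1) * (zeta_r s)\<^sup>2 * real (k1 * k2) powr s / (\<delta> / 2) = 2 * (X / \<delta>)"
      unfolding X_def by (simp add: powr_mult)
    have e2: "4 * real (K - 1) * (zeta_r s)\<^sup>2 * real k1 powr s * real k2 powr s / \<delta> = 4 * (X / \<delta>)"
      unfolding X_def by simp
    have Xd: "X / \<delta> > 0" using Xp \<delta> by simp
    have "ln (4 * (X / \<delta>)) = ln 2 + ln (2 * (X / \<delta>))"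
      using Xd Xp \<delta> ln_mult[of 2 "2 * (X / \<delta>)"] by simp
    moreover have "ln (2::real) \<le> 4" using ln_le_minus_one[of 2] by simp
    ultimately have "ln (4 * (X / \<delta>)) \<le> c" using cl unfolding e1 by linarith
    then have "2 * (1/n1 + 1/n2) * ln (4 * real (K - 1) * (zeta_r s)\<^sup>2 * real k1 powr s * real k2 powr s / \<delta>)
               \<le> 2 * (1/n1 + 1/n2) * c"
      unfolding e2 using n1 n2 by (intro mult_left_mono) (auto intro: add_nonneg_nonneg)
    then show ?thesis using G aK aa m1 m2 unfolding n1_def n2_def by (meson order_trans)
  qed
qed



theorem theorem4:
  fixes M :: "'w measure" and K :: nat and \<delta> \<epsilon> s :: real
    and \<nu> :: "nat \<Rightarrow> real measure" and astar :: nat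
    and Z :: "nat \<Rightarrow> nat \<Rightarrow> 'w \<Rightarrow> real"
    and W :: "nat \<Rightarrow> nat \<Rightarrow> 'w \<Rightarrow> real"
    and SU :: "'u measure" and U :: "'w \<Rightarrow> 'u"
    and pol :: "nat \<Rightarrow> 'u \<Rightarrow> (nat \<times> real) list \<Rightarrow> (nat \<Rightarrow> real) list \<Rightarrow> nat"
  assumes P: "prob_space M"
    and K: "0 < K"
    and \<delta>: "0 < \<delta>" "\<delta> < 1" and \<epsilon>: "0 < \<epsilon>" and s: "1 < s"
    and subg: "\<forall>a<K. subgauss1 (\<nu> a)"
    and best: "astar < K" "\<forall>a<K. a \<noteq> astar \<longrightarrow> (\<integral>x. x \<partial>\<nu> a) < (\<integral>x. x \<partial>\<nu> astar)"
    and Zdist: "\<forall>a<K. \<forall>j. distr M borel (Z a j) = \<nu> a"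
    and Wdist: "\<forall>k\<ge>1. \<forall>a<K. distributed M lborel (W k a) laplace1"
    and indep: "prob_space.indep_vars M (\<lambda>_. borel)
                  (\<lambda>(b, i, j). if b then Z i j else W i j)
                  ({(True, a, j) | a j. a < K} \<union> {(False, k, a) | k a. 1 \<le> k \<and> a < K})"
    and Umeas: "U \<in> measurable M SU"
    and indepU: "prob_space.indep_set M
                  {U -` A \<inter> space M | A. A \<in> sets SU}
                  {(\<lambda>\<omega>. restrict (\<lambda>(b, i, j). if b then Z i j \<omega> else W i j \<omega>)
                       ({(True, a, j) | a j. a < K} \<union> {(False, k, a) | k a. 1 \<le> k \<and> a < K}))
                     -` B \<inter> space M | B. B \<in> sets
                     (Pi\<^sub>M ({(True, a, j) | a j. a < K} \<union> {(False, k, a) | k a. 1 \<le> k \<and> a < K})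
                       (\<lambda>_. borel :: real measure))}"
    and arms: "\<forall>\<omega>\<in>space M. \<forall>t\<ge>1.
                 algI K \<epsilon> pol (U \<omega>) (\<lambda>a j. Z a j \<omega>) (\<lambda>k a. W k a \<omega>) t < K"
    and init: "\<forall>\<omega>\<in>space M.
                 bij_betw (algI K \<epsilon> pol (U \<omega>) (\<lambda>a j. Z a j \<omega>) (\<lambda>k a. W k a \<omega>)) {1..K} {0..<K}"
  shows "measure M {\<omega> \<in> space M.
           wrong_stop K s \<epsilon> \<delta> (algI K \<epsilon> pol (U \<omega>) (\<lambda>a j. Z a j \<omega>) (\<lambda>k a. W k a \<omega>))
             (\<lambda>a j. Z a j \<omega>) (\<lambda>k a. W k a \<omega>) astar} \<le> \<delta>"
proof -
  interpret prob_space M by (rule P)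
  define IS where "IS = {(True, a, j) | a j. a < K} \<union> {(False, k, a) | k a. 1 \<le> k \<and> a < K}"
  define F where "F = (\<lambda>(b, i, j). if b then Z i j else W i j)"
  have ind: "indep_vars (\<lambda>_. borel) F IS" unfolding F_def IS_def by (rule indep)
  have FZ: "\<And>i j. F (True, i, j) = Z i j" by (simp add: F_def)
  have Zm: "Z a j \<in> borel_measurable M" if "a < K" for a j
  proof -
    have "F (True, a, j) \<in> borel_measurable M" using ind that unfolding indep_vars_def IS_def by auto
    then show ?thesis by (simp add: FZ)
  qed
  define \<mu> where "\<mu> a = (\<integral>x. x \<partial>\<nu> a)" for a
  define Lk where "Lk k = ln (2 * real K * real k powr s * zeta_r s / \<delta>)" for k :: nat
  define xg where "xg k1 k2 = ln (4 * real (K - 1) * (zeta_r s)\<^sup>2 * real k1 powr s * real k2 powr s / \<delta>)" for k1 k2 :: nat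
  define Gs where "Gs a k1 k2 = {\<omega>\<in>space M. 2 * (1 / real (nk k1) + 1 / real (nk k2)) * xg k1 k2 \<le>
           ((blk (\<lambda>i j. Z i j \<omega>) a k1 - \<mu> a) - (blk (\<lambda>i j. Z i j \<omega>) astar k2 - \<mu> astar))\<^sup>2}" for a k1 k2
  define Ls where "Ls k a = {\<omega>\<in>space M. Lk k < \<bar>W k a \<omega>\<bar>}" for k a
  define A where "A = {a. a < K \<and> a \<noteq> astar}"
  define S1 where "S1 = (\<Union>k1. \<Union>k2. \<Union>a\<in>A. Gs a (Suc k1) (Suc k2))"
  define S2 where "S2 = (\<Union>k. \<Union>a\<in>{..<K}. Ls (Suc k) a)"
  have finA: "finite A" by (simp add: A_def)
  have z1: "zeta_r s \<ge> 1" by (rule zeta_ge1[OF s])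
  have zs: "summable (\<lambda>n. 1 / real (Suc n) powr s)" by (rule zeta_summable[OF s])
  have zsum: "(\<Sum>n. 1 / real (Suc n) powr s) = zeta_r s" by (simp add: zeta_r_def)
  have incl: "{\<omega> \<in> space M.
           wrong_stop K s \<epsilon> \<delta> (algI K \<epsilon> pol (U \<omega>) (\<lambda>a j. Z a j \<omega>) (\<lambda>k a. W k a \<omega>))
             (\<lambda>a j. Z a j \<omega>) (\<lambda>k a. W k a \<omega>) astar} \<subseteq> S1 \<union> S2"
  proof safe
    fix \<omega> assume \<omega>: "\<omega> \<in> space M"
      and ws: "wrong_stop K s \<epsilon> \<delta> (algI K \<epsilon> pol (U \<omega>) (\<lambda>a j. Z a j \<omega>) (\<lambda>k a. W k a \<omega>))
             (\<lambda>a j. Z a j \<omega>) (\<lambda>k a. W k a \<omega>) astar"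
      and nS2: "\<omega> \<notin> S2"
    define I where "I = algI K \<epsilon> pol (U \<omega>) (\<lambda>a j. Z a j \<omega>) (\<lambda>k a. W k a \<omega>)"
    have bij: "bij_betw I {1..K} {0..<K}" using init \<omega> by (simp add: I_def)
    have base: "\<forall>a<K. Ncnt I (K+1) a = 1"
    proof safe
      fix a assume a: "a < K"
      have "a \<in> I ` {1..K}" using bij a by (simp add: bij_betw_def)
      then obtain t where t: "t \<in> {1..K}" "I t = a" by blast
      have inj: "inj_on I {1..K}" using bij by (simp add: bij_betw_def)
      have "{t'. 1 \<le> t' \<and> t' < K + 1 \<and> I t' = a} = {t}"
      proof (intro equalityI subsetI)
        fix t' assume "t' \<in> {t'. 1 \<le> t' \<and> t' < K + 1 \<and> I t' = a}"
        then have "t' \<in> {1..K}" "I t' = I t" using t by auto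
        then show "t' \<in> {t}" using inj_onD[OF inj _ _ t(1)] by auto
      qed (use t in auto)
      then show "Ncnt I (K+1) a = 1" by (simp add: Ncnt_def)
    qed
    have mu: "\<forall>a<K. a \<noteq> astar \<longrightarrow> \<mu> a < \<mu> astar" using best by (simp add: \<mu>_def)
    obtain a k1 k2 where a: "a < K" "a \<noteq> astar" and k: "1 \<le> k1" "1 \<le> k2"
      and cases: "Lk k1 < \<bar>W k1 a \<omega>\<bar> \<or> Lk k2 < \<bar>W k2 astar \<omega>\<bar> \<or>
           2 * (1 / real (nk k1) + 1 / real (nk k2)) * xg k1 k2
           \<le> ((blk (\<lambda>i j. Z i j \<omega>) a k1 - \<mu> a) - (blk (\<lambda>i j. Z i j \<omega>) astar k2 - \<mu> astar))\<^sup>2"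
      using wrong_stop_cases[OF K base best(1) mu \<epsilon> \<delta> s ws[folded I_def]]
      unfolding Lk_def xg_def by blast
    obtain k1' where k1': "k1 = Suc k1'" using k by (cases k1) auto
    obtain k2' where k2': "k2 = Suc k2'" using k by (cases k2) auto
    have inS2: "\<omega> \<in> S2" if "b < K" "Lk (Suc k') < \<bar>W (Suc k') b \<omega>\<bar>" for b k'
    proof -
      have "\<omega> \<in> Ls (Suc k') b" using that \<omega> by (simp add: Ls_def)
      then show ?thesis unfolding S2_def using that(1) by blast
    qed
    have "\<not> (Lk k1 < \<bar>W k1 a \<omega>\<bar>)"
      using nS2 inS2[OF a(1)] unfolding k1' by blast
    moreover have "\<not> (Lk k2 < \<bar>W k2 astar \<omega>\<bar>)"
      using nS2 inS2[OF best(1)] unfolding k2' by blast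
    ultimately have "\<omega> \<in> Gs a k1 k2" using cases \<omega> by (simp add: Gs_def)
    then show "\<omega> \<in> S1" unfolding S1_def A_def k1' k2' using a by blast
  qed
  define C where "C = \<delta> / (2 * (zeta_r s)\<^sup>2)"
  define f where "f n = 1 / real (Suc n) powr s" for n
  have fpos: "f n > 0" for n by (simp add: f_def)
  have Cpos: "C > 0" using \<delta> z1 by (simp add: C_def)
  have Gs_meas: "Gs a k1 k2 \<in> sets M" if "a < K" for a k1 k2
  proof -
    have [measurable]: "\<And>j. Z a j \<in> borel_measurable M" "\<And>j. Z astar j \<in> borel_measurable M"
      using Zm that best(1) by auto
    show ?thesis unfolding Gs_def blk_def by measurable
  qed
  have Wm: "W k a \<in> borel_measurable M" if "1 \<le> k" "a < K" for k a
    using distributed_measurable[OF Wdist[rule_format, OF that]] by simp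
  have Ls_meas: "Ls k a \<in> sets M" if "1 \<le> k" "a < K" for k a
  proof -
    have [measurable]: "W k a \<in> borel_measurable M" using Wm[OF that] .
    show ?thesis unfolding Ls_def by measurable
  qed
  have S1m: "S1 \<in> sets M" unfolding S1_def using Gs_meas finA
    by (intro sets.countable_UN sets.finite_UN) (auto simp: A_def)
  have S2m: "S2 \<in> sets M" unfolding S2_def using Ls_meas
    by (intro sets.countable_UN sets.finite_UN) auto
  have Gb: "emeasure M (\<Union>a\<in>A. Gs a (Suc k1) (Suc k2)) \<le> ennreal (C * f k1 * f k2)" for k1 k2
  proof (cases "A = {}")
    case True then show ?thesis by simp
  next
    case False
    then obtain a0 where a0: "a0 < K" "a0 \<noteq> astar" by (auto simp: A_def)
    have K2: "2 \<le> K" using a0 best(1) by linarith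
    define Y where "Y = 4 * real (K - 1) * (zeta_r s)\<^sup>2 * real (Suc k1) powr s * real (Suc k2) powr s / \<delta>"
    have Kr: "real (K - 1) \<ge> 1" using K2 by simp
    define X where "X = 4 * real (K - 1) * (zeta_r s)\<^sup>2 * real (Suc k1) powr s * real (Suc k2) powr s"
    have "X \<ge> 4 * 1 * 1 * 1 * 1" unfolding X_def
      using Kr z1 s by (intro mult_mono) (auto simp: one_le_power intro!: ge_one_powr_ge_zero)
    then have "\<delta> < X" using \<delta> by simp
    then have Y1: "Y > 1" using \<delta> unfolding Y_def X_def[symmetric] by (simp add: less_divide_eq)
    have xg: "xg (Suc k1) (Suc k2) = ln Y" by (simp add: xg_def Y_def)
    have xgp: "0 < xg (Suc k1) (Suc k2)" using Y1 xg by simp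
    have each: "emeasure M (Gs a (Suc k1) (Suc k2)) \<le> ennreal (2 * exp (- xg (Suc k1) (Suc k2)))" if "a \<in> A" for a
    proof -
      have aK: "a < K" "a \<noteq> astar" using that by (auto simp: A_def)
      show ?thesis unfolding Gs_def \<mu>_def
        by (rule gauss_event[OF ind FZ _ _ aK(2)])
           (use aK best(1) Zdist subg xgp in \<open>auto simp: IS_def\<close>)
    qed
    have "emeasure M (\<Union>a\<in>A. Gs a (Suc k1) (Suc k2)) \<le> (\<Sum>a\<in>A. emeasure M (Gs a (Suc k1) (Suc k2)))"
      by (rule emeasure_subadditive_finite[OF finA]) (use Gs_meas in \<open>auto simp: A_def\<close>)
    also have "\<dots> \<le> (\<Sum>a\<in>A. ennreal (2 * exp (- xg (Suc k1) (Suc k2))))"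
      by (intro sum_mono each)
    also have "\<dots> = ennreal (real (card A) * (2 * exp (- xg (Suc k1) (Suc k2))))"
      by (simp add: ennreal_mult' ennreal_of_nat_eq_real_of_nat)
    also have "real (card A) * (2 * exp (- xg (Suc k1) (Suc k2))) = C * f k1 * f k2"
    proof -
      have cA: "card A = K - 1"
      proof -
        have "A = {..<K} - {astar}" by (auto simp: A_def)
        then show ?thesis using best(1) by simp
      qed
      have "exp (- xg (Suc k1) (Suc k2)) = 1 / Y" using xg Y1 by (simp add: exp_minus inverse_eq_divide)
      then show ?thesis unfolding cA C_def f_def Y_def using Kr z1 \<delta>
        by (simp add: field_simps)
    qed
    finally show ?thesis .
  qed
  have S1b: "emeasure M S1 \<le> ennreal (\<delta> / 2)"
  proof -
    have "emeasure M S1 \<le> (\<Sum>k1. emeasure M (\<Union>k2. \<Union>a\<in>A. Gs a (Suc k1) (Suc k2)))"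
      unfolding S1_def using Gs_meas finA
      by (intro emeasure_subadditive_countably) (auto intro!: sets.countable_UN sets.finite_UN simp: A_def)
    also have "\<dots> \<le> (\<Sum>k1. \<Sum>k2. emeasure M (\<Union>a\<in>A. Gs a (Suc k1) (Suc k2)))"
      using Gs_meas finA
      by (intro suminf_le summableI emeasure_subadditive_countably) (auto intro!: sets.finite_UN simp: A_def)
    also have "\<dots> \<le> (\<Sum>k1. \<Sum>k2. ennreal (C * f k1 * f k2))"
      by (intro suminf_le summableI Gb)
    also have "\<dots> = (\<Sum>k1. ennreal (C * f k1 * zeta_r s))"
    proof -
      have "(\<Sum>k2. ennreal (C * f k1 * f k2)) = ennreal (C * f k1 * zeta_r s)" for k1
      proof -
        have "(\<Sum>k2. ennreal (C * f k1 * f k2)) = ennreal (\<Sum>k2. C * f k1 * f k2)"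
          using Cpos fpos by (intro suminf_ennreal2 summable_mult) (auto intro: less_imp_le simp: zs[folded f_def[abs_def]])
        also have "(\<Sum>k2. C * f k1 * f k2) = C * f k1 * zeta_r s"
          by (subst suminf_mult[OF zs[folded f_def[abs_def]]]) (simp add: zsum[folded f_def[abs_def]])
        finally show ?thesis .
      qed
      then show ?thesis by simp
    qed
    also have "\<dots> = ennreal (\<Sum>k1. C * f k1 * zeta_r s)"
      using Cpos fpos z1 zs[folded f_def[abs_def]]
      by (intro suminf_ennreal2 summable_mult2) (auto intro: less_imp_le)
    also have "(\<Sum>k1. C * f k1 * zeta_r s) = \<delta> / 2"
    proof -
      have "(\<Sum>k1. C * f k1 * zeta_r s) = (\<Sum>k1. f k1 * (C * zeta_r s))" by (simp add: mult_ac)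
      also have "\<dots> = zeta_r s * (C * zeta_r s)"
        by (subst suminf_mult2[OF zs[folded f_def[abs_def]], symmetric]) (simp add: zsum[folded f_def[abs_def]])
      also have "\<dots> = \<delta> / 2" using z1 by (simp add: C_def power2_eq_square)
      finally show ?thesis .
    qed
    finally show ?thesis .
  qed
  have Lb: "emeasure M (\<Union>a\<in>{..<K}. Ls (Suc k) a) \<le> ennreal (\<delta> / (2 * zeta_r s) * f k)" for k
  proof -
    define Y where "Y = 2 * real K * real (Suc k) powr s * zeta_r s / \<delta>"
    define X where "X = 2 * real K * real (Suc k) powr s * zeta_r s"
    have "X \<ge> 2 * 1 * 1 * 1" unfolding X_def
      using K z1 s by (intro mult_mono) (auto intro!: ge_one_powr_ge_zero)
    then have "\<delta> < X" using \<delta> by simp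
    then have Y1: "Y > 1" using \<delta> unfolding Y_def X_def[symmetric] by (simp add: less_divide_eq)
    have LY: "Lk (Suc k) = ln Y" by (simp add: Lk_def Y_def)
    have each: "emeasure M (Ls (Suc k) a) \<le> ennreal (exp (- Lk (Suc k)))" if "a < K" for a
    proof -
      have D: "distributed M lborel (W (Suc k) a) laplace1" using Wdist that by auto
      have Wml: "W (Suc k) a \<in> measurable M lborel" using distributed_measurable[OF D] .
      have set: "{x::real. Lk (Suc k) < \<bar>x\<bar>} \<in> sets lborel" by simp
      have "Ls (Suc k) a = W (Suc k) a -` {x. Lk (Suc k) < \<bar>x\<bar>} \<inter> space M" by (auto simp: Ls_def)
      then have "emeasure M (Ls (Suc k) a) = emeasure (distr M lborel (W (Suc k) a)) {x. Lk (Suc k) < \<bar>x\<bar>}"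
        by (simp add: emeasure_distr[OF Wml set])
      also have "\<dots> = emeasure (density lborel laplace1) {x. Lk (Suc k) < \<bar>x\<bar>}"
        using distributed_distr_eq_density[OF D] by simp
      also have "\<dots> \<le> ennreal (exp (- Lk (Suc k)))"
        by (rule laplace_tail) (use LY Y1 in simp)
      finally show ?thesis .
    qed
    have "emeasure M (\<Union>a\<in>{..<K}. Ls (Suc k) a) \<le> (\<Sum>a\<in>{..<K}. emeasure M (Ls (Suc k) a))"
      by (rule emeasure_subadditive_finite) (use Ls_meas in auto)
    also have "\<dots> \<le> (\<Sum>a\<in>{..<K}. ennreal (exp (- Lk (Suc k))))"
      by (intro sum_mono each) auto
    also have "\<dots> = ennreal (real K * exp (- Lk (Suc k)))"
      by (simp add: ennreal_mult' ennreal_of_nat_eq_real_of_nat)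
    also have "real K * exp (- Lk (Suc k)) = \<delta> / (2 * zeta_r s) * f k"
    proof -
      have "exp (- Lk (Suc k)) = 1 / Y" using LY Y1 by (simp add: exp_minus inverse_eq_divide)
      then show ?thesis unfolding f_def Y_def using K z1 \<delta> by (simp add: field_simps)
    qed
    finally show ?thesis .
  qed
  have S2b: "emeasure M S2 \<le> ennreal (\<delta> / 2)"
  proof -
    have "emeasure M S2 \<le> (\<Sum>k. emeasure M (\<Union>a\<in>{..<K}. Ls (Suc k) a))"
      unfolding S2_def using Ls_meas
      by (intro emeasure_subadditive_countably) (auto intro!: sets.finite_UN)
    also have "\<dots> \<le> (\<Sum>k. ennreal (\<delta> / (2 * zeta_r s) * f k))"
      by (intro suminf_le summableI Lb)
    also have "\<dots> = ennreal (\<Sum>k. \<delta> / (2 * zeta_r s) * f k)"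
      using fpos \<delta> z1 zs[folded f_def[abs_def]]
      by (intro suminf_ennreal2 summable_mult) (auto intro: less_imp_le)
    also have "(\<Sum>k. \<delta> / (2 * zeta_r s) * f k) = \<delta> / 2"
    proof -
      have "(\<Sum>k. \<delta> / (2 * zeta_r s) * f k) = \<delta> / (2 * zeta_r s) * (\<Sum>k. f k)"
        by (rule suminf_mult[OF zs[folded f_def[abs_def]]])
      also have "\<dots> = \<delta> / 2" using z1 by (simp add: zsum[folded f_def[abs_def]])
      finally show ?thesis .
    qed
    finally show ?thesis .
  qed
  have Sb: "emeasure M (S1 \<union> S2) \<le> ennreal \<delta>"
  proof -
    have "emeasure M (S1 \<union> S2) \<le> emeasure M S1 + emeasure M S2" by (rule emeasure_subadditive[OF S1m S2m])
    also have "\<dots> \<le> ennreal (\<delta> / 2) + ennreal (\<delta> / 2)" by (rule add_mono[OF S1b S2b])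
    also have "\<dots> = ennreal \<delta>" using \<delta> by (simp flip: ennreal_plus)
    finally show ?thesis .
  qed
  have "emeasure M {\<omega> \<in> space M.
           wrong_stop K s \<epsilon> \<delta> (algI K \<epsilon> pol (U \<omega>) (\<lambda>a j. Z a j \<omega>) (\<lambda>k a. W k a \<omega>))
             (\<lambda>a j. Z a j \<omega>) (\<lambda>k a. W k a \<omega>) astar} \<le> ennreal \<delta>"
    using emeasure_mono[OF incl sets.Un[OF S1m S2m]] Sb by (rule order_trans)
  then have "enn2real (emeasure M {\<omega> \<in> space M.
           wrong_stop K s \<epsilon> \<delta> (algI K \<epsilon> pol (U \<omega>) (\<lambda>a j. Z a j \<omega>) (\<lambda>k a. W k a \<omega>))
             (\<lambda>a j. Z a j \<omega>) (\<lambda>k a. W k a \<omega>) astar}) \<le> enn2real (ennreal \<delta>)"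
    by (rule enn2real_mono) simp
  then show ?thesis unfolding measure_def using \<delta> by simp
qed

end
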